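(* Let $a_0\in[\lambda,1]$ with $\lambda>0$, and let $v$ solve $\partial_tv-a_0\partial_x^2v=f$ on $(-1,0)\times\mathbb{R}$. There is a constant $C$ depending only on $\lambda$ such that $$\sup_{(t,x)\in(-1,0)\times\mathbb{R}}(t+1)^{1/2}\eta(x)v^2(t,x)\le C\Big(\int_{-1}^0\int\eta f^2dxdt+\int\eta v^2dx\Big|_{t=-1}\Big).$$
   Context: $\eta(x)=\frac12e^{-|x|}$. Solutions are assumed sufficiently regular and decaying. *)

theory Defs
  imports "HOL-Analysis.Analysis"
begin

definition eta :: "real \<Rightarrow> real" where
  "eta x = exp (- \<bar>x\<bar>) / 2"

end

theory Submission
  imports Defs "HOL-Probability.Distributions" "HOL-Real_Asymp.Real_Asymp"
begin

lemma dct_at: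
  fixes s :: "real \<Rightarrow> real \<Rightarrow> real" and f w :: "real \<Rightarrow> real"
  assumes ev: "eventually (\<lambda>t. s t \<in> borel_measurable lborel \<and> (\<forall>y. \<bar>s t y\<bar> \<le> w y)) (at x within S)"
    and f: "f \<in> borel_measurable lborel" and w: "integrable lborel w"
    and lim: "\<And>y. ((\<lambda>t. s t y) \<longlongrightarrow> f y) (at x within S)"
  shows "((\<lambda>t. \<integral>y. s t y \<partial>lborel) \<longlongrightarrow> (\<integral>y. f y \<partial>lborel)) (at x within S)"
proof (subst tendsto_at_iff_sequentially, intro allI impI)
  fix X :: "nat \<Rightarrow> real" assume X: "\<forall>i. X i \<in> S - {x}" "X \<longlonglongrightarrow> x"
  have fl: "filterlim X (at x within S) sequentially"
    using X by (intro filterlim_at_withinI) (auto simp: eventually_sequentially)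
  have "eventually (\<lambda>i. s (X i) \<in> borel_measurable lborel \<and> (\<forall>y. \<bar>s (X i) y\<bar> \<le> w y)) sequentially"
    using ev fl by (rule eventually_compose_filterlim)
  then obtain N where N: "\<And>i. i \<ge> N \<Longrightarrow> s (X i) \<in> borel_measurable lborel \<and> (\<forall>y. \<bar>s (X i) y\<bar> \<le> w y)"
    by (auto simp: eventually_sequentially)
  have lim2: "\<And>y. (\<lambda>i. s (X i) y) \<longlonglongrightarrow> f y"
    using lim fl by (rule filterlim_compose)
  have "(\<lambda>i. \<integral>y. s (X (i + N)) y \<partial>lborel) \<longlonglongrightarrow> (\<integral>y. f y \<partial>lborel)"
  proof (rule integral_dominated_convergence[where w=w])
    show "AE y in lborel. (\<lambda>i. s (X (i + N)) y) \<longlonglongrightarrow> f y"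
      using lim2 by (auto intro!: LIMSEQ_ignore_initial_segment)
    show "\<And>i. AE y in lborel. norm (s (X (i + N)) y) \<le> w y"
      using N by auto
  qed (use N f w in auto)
  then show "((\<lambda>t. \<integral>y. s t y \<partial>lborel) \<circ> X) \<longlonglongrightarrow> (\<integral>y. f y \<partial>lborel)"
    unfolding comp_def by (rule LIMSEQ_offset)
qed

lemma deriv_under_integral:
  fixes u u' :: "real \<Rightarrow> real \<Rightarrow> real" and g :: "real \<Rightarrow> real"
  assumes cd: "c < s" "s < d"
    and der: "\<And>t y. t \<in> {c<..<d} \<Longrightarrow> ((\<lambda>t. u t y) has_real_derivative u' t y) (at t)"
    and meas: "\<And>t. t \<in> {c<..<d} \<Longrightarrow> u t \<in> borel_measurable lborel"
    and int: "\<And>t. t \<in> {c<..<d} \<Longrightarrow> integrable lborel (u t)"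
    and meas': "u' s \<in> borel_measurable lborel"
    and bd: "\<And>t y. t \<in> {c<..<d} \<Longrightarrow> \<bar>u' t y\<bar> \<le> g y" and g: "integrable lborel g"
  shows "((\<lambda>t. \<integral>y. u t y \<partial>lborel) has_real_derivative (\<integral>y. u' s y \<partial>lborel)) (at s)"
proof -
  define q where "q h y = (u (s + h) y - u s y) / h" for h y
  have ev: "eventually (\<lambda>h. s + h \<in> {c<..<d}) (at (0::real))"
  proof -
    have "0 < min (s - c) (d - s)" using cd by auto
    then show ?thesis unfolding eventually_at
      by (intro exI[of _ "min (s - c) (d - s)"]) (auto simp: dist_real_def)
  qed
  have "((\<lambda>h. \<integral>y. q h y \<partial>lborel) \<longlongrightarrow> (\<integral>y. u' s y \<partial>lborel)) (at 0)"
  proof (rule dct_at[where w=g])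
    show "eventually (\<lambda>h. q h \<in> borel_measurable lborel \<and> (\<forall>y. \<bar>q h y\<bar> \<le> g y)) (at 0)"
      using ev
    proof (eventually_elim)
      case (elim h)
      have m: "q h \<in> borel_measurable lborel"
      proof -
        have "s \<in> {c<..<d}" using cd by auto
        then show ?thesis
          unfolding q_def using meas[OF elim(1)] meas[of s] by measurable
      qed
      have "\<bar>q h y\<bar> \<le> g y" for y
      proof (cases "h = 0")
        case True then show ?thesis using bd[of s y] cd by (auto simp: q_def)
      next
        case False
        have "norm (u (s + h) y - u s y) \<le> g y * norm (s + h - s)"
          by (rule field_differentiable_bound[where S="{c<..<d}" and f'="\<lambda>t. u' t y"])
             (use elim cd in \<open>auto intro!: has_field_derivative_at_within der bd\<close>)
        then show ?thesis using False by (simp add: q_def divide_simps abs_mult)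
      qed
      then show ?case using m by auto
    qed
    show "\<And>y. ((\<lambda>h. q h y) \<longlongrightarrow> u' s y) (at 0)"
      using der cd unfolding q_def DERIV_def by auto
  qed (use meas' g in auto)
  moreover have "eventually (\<lambda>h. (\<integral>y. q h y \<partial>lborel) = ((\<integral>y. u (s + h) y \<partial>lborel) - (\<integral>y. u s y \<partial>lborel)) / h) (at 0)"
    using ev
  proof eventually_elim
    case (elim h)
    then show ?case unfolding q_def using int[OF elim] int[of s] cd
      by (simp add: integral_diff)
  qed
  ultimately show ?thesis unfolding DERIV_def
    by (subst (asm) tendsto_cong) auto
qed


lemma tendsto_zero_bounded_mult:
  fixes p q :: "real \<Rightarrow> real"
  assumes "(p \<longlongrightarrow> 0) F" "\<And>y. \<bar>q y\<bar> \<le> B"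
  shows "((\<lambda>y. p y * q y) \<longlongrightarrow> 0) F"
proof -
  have "((\<lambda>y. \<bar>p y\<bar> * B) \<longlongrightarrow> 0) F"
    using assms(1) by (intro tendsto_mult_left_zero tendsto_rabs_zero)
  moreover have "eventually (\<lambda>y. norm (p y * q y) \<le> \<bar>p y\<bar> * B) F"
    using assms(2) by (intro always_eventually) (auto simp: abs_mult intro!: mult_left_mono)
  ultimately show ?thesis
    by (rule Lim_null_comparison[rotated])
qed

lemma ibp_R:
  fixes p p' p'' q q' q'' :: "real \<Rightarrow> real"
  assumes dp: "\<And>y. (p has_real_derivative p' y) (at y)" "\<And>y. (p' has_real_derivative p'' y) (at y)"
    and dq: "\<And>y. (q has_real_derivative q' y) (at y)" "\<And>y. (q' has_real_derivative q'' y) (at y)"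
    and cont: "continuous_on UNIV q''" "continuous_on UNIV p''"
    and bq: "\<And>y. \<bar>q y\<bar> \<le> B" "\<And>y. \<bar>q' y\<bar> \<le> B"
    and lim: "(p \<longlongrightarrow> 0) at_top" "(p \<longlongrightarrow> 0) at_bot" "(p' \<longlongrightarrow> 0) at_top" "(p' \<longlongrightarrow> 0) at_bot"
    and int: "integrable lborel (\<lambda>y. p y * q'' y - p'' y * q y)"
  shows "(\<integral>y. p y * q'' y - p'' y * q y \<partial>lborel) = 0"
proof -
  define H where "H y = p y * q' y - p' y * q y" for y
  define D where "D y = p y * q'' y - p'' y * q y" for y
  have contp: "continuous_on UNIV p" "continuous_on UNIV p'" "continuous_on UNIV q" "continuous_on UNIV q'"
    by (rule continuous_at_imp_continuous_on, blast intro: DERIV_isCont dp dq)+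
  have contD: "continuous_on UNIV D"
    unfolding D_def using contp cont by (intro continuous_intros) auto
  have dH: "(H has_real_derivative D y) (at y)" for y
  proof -
    have "((\<lambda>y. p y * q' y - p' y * q y) has_real_derivative
        (p' y * q' y + p y * q'' y) - (p'' y * q y + p' y * q' y)) (at y)"
      using DERIV_diff[OF DERIV_mult[OF dp(1) dq(2)] DERIV_mult[OF dp(2) dq(1)]] by (simp add: algebra_simps)
    moreover have "H = (\<lambda>y. p y * q' y - p' y * q y)" by (simp add: H_def fun_eq_iff)
    ultimately show ?thesis by (simp add: algebra_simps D_def)
  qed
  have fin: "(\<integral>y. indicator {-real n .. real n} y *\<^sub>R D y \<partial>lborel) = H (real n) - H (- real n)" for n
  proof (rule integral_FTC_atLeastAtMost)
    show "- real n \<le> real n" by simp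
    show "continuous_on {- real n..real n} D" using contD by (rule continuous_on_subset) simp
    fix x
    have "(H has_vector_derivative D x) (at x)"
      using dH[of x] by (simp add: has_real_derivative_iff_has_vector_derivative)
    then show "(H has_vector_derivative D x) (at x within {- real n..real n})"
      by (rule has_vector_derivative_at_within)
  qed
  have lim1: "(\<lambda>n. \<integral>y. indicator {-real n .. real n} y *\<^sub>R D y \<partial>lborel) \<longlonglongrightarrow> (\<integral>y. D y \<partial>lborel)"
  proof (rule integral_dominated_convergence[where w="\<lambda>y. \<bar>D y\<bar>"])
    show "D \<in> borel_measurable lborel"
      using contD by (simp add: borel_measurable_continuous_onI)
    then show "\<And>i. (\<lambda>y. indicator {-real i .. real i} y *\<^sub>R D y) \<in> borel_measurable lborel"
      by measurable
    show "integrable lborel (\<lambda>y. \<bar>D y\<bar>)" using int unfolding D_def by auto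
    show "\<And>i. AE y in lborel. norm (indicator {-real i .. real i} y *\<^sub>R D y) \<le> \<bar>D y\<bar>"
      by (auto simp: indicator_def)
    show "AE y in lborel. (\<lambda>i. indicator {-real i .. real i} y *\<^sub>R D y) \<longlonglongrightarrow> D y"
    proof (intro AE_I2)
      fix y :: real
      obtain N :: nat where "\<bar>y\<bar> \<le> real N" using real_arch_simple by blast
      then have "\<forall>i\<ge>N. indicator {-real i .. real i} y *\<^sub>R D y = D y"
        by (auto simp: indicator_def)
      then show "(\<lambda>i. indicator {-real i .. real i} y *\<^sub>R D y) \<longlonglongrightarrow> D y"
        by (intro tendsto_eventually) (auto simp: eventually_sequentially)
    qed
  qed
  have Htop: "(H \<longlongrightarrow> 0) at_top" and Hbot: "(H \<longlongrightarrow> 0) at_bot"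
    unfolding H_def using tendsto_diff[OF tendsto_zero_bounded_mult[OF lim(1) bq(2)] tendsto_zero_bounded_mult[OF lim(3) bq(1)]]
      tendsto_diff[OF tendsto_zero_bounded_mult[OF lim(2) bq(2)] tendsto_zero_bounded_mult[OF lim(4) bq(1)]]
    by auto
  have "(\<lambda>n. H (real n) - H (- real n)) \<longlonglongrightarrow> 0 - 0"
  proof (intro tendsto_diff)
    show "(\<lambda>n. H (real n)) \<longlonglongrightarrow> 0"
      using Htop filterlim_real_sequentially by (rule filterlim_compose)
    have "filterlim (\<lambda>n. - real n) at_bot sequentially"
      using filterlim_real_sequentially by (simp add: filterlim_uminus_at_top)
    with Hbot show "(\<lambda>n. H (- real n)) \<longlonglongrightarrow> 0"
      by (rule filterlim_compose)
  qed
  then have "(\<lambda>n. \<integral>y. indicator {-real n .. real n} y *\<^sub>R D y \<partial>lborel) \<longlonglongrightarrow> 0"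
    unfolding fin by simp
  then have "(\<integral>y. D y \<partial>lborel) = 0"
    using lim1 LIMSEQ_unique by blast
  then show ?thesis unfolding D_def .
qed


definition kk :: "real \<Rightarrow> real \<Rightarrow> real \<Rightarrow> real" where
  "kk a \<tau> z = exp (- z\<^sup>2 / (4*a*\<tau>)) / sqrt (4*pi*a*\<tau>)"

lemma kk_pos: "a > 0 \<Longrightarrow> \<tau> > 0 \<Longrightarrow> kk a \<tau> z > 0"
  by (simp add: kk_def)

lemma kk_normal: "a > 0 \<Longrightarrow> \<tau> > 0 \<Longrightarrow> kk a \<tau> z = normal_density 0 (sqrt (2*a*\<tau>)) z"
  by (simp add: kk_def normal_density_def field_simps)

lemma kk_deriv_z:
  assumes "a > 0" "\<tau> > 0"
  shows "((\<lambda>z. kk a \<tau> z) has_real_derivative (- z / (2*a*\<tau>) * kk a \<tau> z)) (at z)"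
  unfolding kk_def using assms
  by (auto intro!: derivative_eq_intros simp: field_simps power2_eq_square)

lemma kk_deriv_zz:
  assumes "a > 0" "\<tau> > 0"
  shows "((\<lambda>z. - z / (2*a*\<tau>) * kk a \<tau> z) has_real_derivative
           ((z\<^sup>2 / (4*a\<^sup>2*\<tau>\<^sup>2) - 1 / (2*a*\<tau>)) * kk a \<tau> z)) (at z)"
  using assms
  by (auto intro!: derivative_eq_intros kk_deriv_z simp: field_simps power2_eq_square)

lemma kk_deriv_t:
  assumes a: "a > 0" and t: "\<tau> > 0"
  shows "((\<lambda>\<tau>. kk a \<tau> z) has_real_derivative (a * ((z\<^sup>2 / (4*a\<^sup>2*\<tau>\<^sup>2) - 1 / (2*a*\<tau>)) * kk a \<tau> z))) (at \<tau>)"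
proof -
  define X where "X = 4*pi*a*\<tau>"
  define E where "E = exp (- z\<^sup>2 / (4*a*\<tau>))"
  have X: "X > 0" unfolding X_def using a t by simp
  have dE: "((\<lambda>\<tau>. exp (- z\<^sup>2 / (4*a*\<tau>))) has_real_derivative E * (z\<^sup>2 / (4*a*\<tau>\<^sup>2))) (at \<tau>)"
    unfolding E_def using a t by (auto intro!: derivative_eq_intros simp: field_simps power2_eq_square)
  have dS: "((\<lambda>\<tau>. sqrt (4*pi*a*\<tau>)) has_real_derivative (4*pi*a) / (2 * sqrt X)) (at \<tau>)"
    using X unfolding X_def by (auto intro!: derivative_eq_intros simp: field_simps)
  have "((\<lambda>\<tau>. exp (- z\<^sup>2 / (4*a*\<tau>)) / sqrt (4*pi*a*\<tau>)) has_real_derivative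
      (E * (z\<^sup>2 / (4*a*\<tau>\<^sup>2)) * sqrt X - E * ((4*pi*a) / (2 * sqrt X))) / (sqrt X * sqrt X)) (at \<tau>)"
    using DERIV_divide[OF dE dS] X a t unfolding X_def E_def by simp
  moreover have "(E * (z\<^sup>2 / (4*a*\<tau>\<^sup>2)) * sqrt X - E * ((4*pi*a) / (2 * sqrt X))) / (sqrt X * sqrt X)
      = a * ((z\<^sup>2 / (4*a\<^sup>2*\<tau>\<^sup>2) - 1 / (2*a*\<tau>)) * (E / sqrt X))"
  proof -
    have sq: "sqrt X * sqrt X = X" using X by simp
    have "sqrt X > 0" using X by simp
    then show ?thesis unfolding sq using a t X unfolding X_def
      by (simp add: field_simps power2_eq_square)
  qed
  ultimately show ?thesis unfolding kk_def E_def X_def by simp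
qed

lemma kk_normal_shift: "a > 0 \<Longrightarrow> \<tau> > 0 \<Longrightarrow> kk a \<tau> (y - x0) = normal_density x0 (sqrt (2*a*\<tau>)) y"
  by (simp add: kk_def normal_density_def field_simps power2_commute)

lemma kk_shift_integrable: "a > 0 \<Longrightarrow> \<tau> > 0 \<Longrightarrow> integrable lborel (\<lambda>y. kk a \<tau> (y - x0))"
  by (simp add: kk_normal_shift)

lemma kk_shift_integral: "a > 0 \<Longrightarrow> \<tau> > 0 \<Longrightarrow> (\<integral>y. kk a \<tau> (y - x0) \<partial>lborel) = 1"
  by (simp add: kk_normal_shift)

lemma kk_shift_moment: "a > 0 \<Longrightarrow> \<tau> > 0 \<Longrightarrow> integrable lborel (\<lambda>y. kk a \<tau> (y - x0) * \<bar>y - x0\<bar>^k)"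
proof -
  assume "a > 0" "\<tau> > 0"
  then have "sqrt (2*a*\<tau>) > 0" by simp
  then show ?thesis using \<open>a > 0\<close> \<open>\<tau> > 0\<close>
    by (simp add: kk_normal_shift integrable_normal_moment_abs)
qed

lemma kk_mono_bound:
  assumes a: "a > 0" and t: "0 < \<tau>1" "\<tau>1 \<le> \<tau>" "\<tau> \<le> \<tau>2"
  shows "kk a \<tau> z \<le> sqrt (\<tau>2 / \<tau>1) * kk a \<tau>2 z"
proof -
  have e: "exp (- z\<^sup>2 / (4*a*\<tau>)) \<le> exp (- z\<^sup>2 / (4*a*\<tau>2))"
    using a t by (auto simp: divide_simps intro!: mult_left_mono)
  have pp: "0 \<le> pi * (\<tau> * a)" "0 \<le> pi * (\<tau>1 * a)" "0 \<le> pi * (\<tau>2 * a)"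
    using a t by auto
  have "1 / sqrt (4*pi*a*\<tau>) \<le> 1 / sqrt (4*pi*a*\<tau>1)"
    using a t pp by (auto simp: divide_simps)
  also have "1 / sqrt (4*pi*a*\<tau>1) = sqrt (\<tau>2 / \<tau>1) / sqrt (4*pi*a*\<tau>2)"
    using a t pp by (simp add: real_sqrt_divide real_sqrt_mult field_simps)
  finally have s: "1 / sqrt (4*pi*a*\<tau>) \<le> sqrt (\<tau>2 / \<tau>1) / sqrt (4*pi*a*\<tau>2)" .
  have "kk a \<tau> z = exp (- z\<^sup>2 / (4*a*\<tau>)) * (1 / sqrt (4*pi*a*\<tau>))" by (simp add: kk_def)
  also have "\<dots> \<le> exp (- z\<^sup>2 / (4*a*\<tau>2)) * (sqrt (\<tau>2 / \<tau>1) / sqrt (4*pi*a*\<tau>2))"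
    by (intro mult_mono e s) (use pp in auto)
  also have "\<dots> = sqrt (\<tau>2 / \<tau>1) * kk a \<tau>2 z" by (simp add: kk_def)
  finally show ?thesis .
qed

lemma kk_lim:
  assumes "a > 0" "\<tau> > 0"
  shows "(kk a \<tau> \<longlongrightarrow> 0) at_top" "(kk a \<tau> \<longlongrightarrow> 0) at_bot"
    "((\<lambda>z. - z / (2*a*\<tau>) * kk a \<tau> z) \<longlongrightarrow> 0) at_top"
    "((\<lambda>z. - z / (2*a*\<tau>) * kk a \<tau> z) \<longlongrightarrow> 0) at_bot"
  using assms unfolding kk_def by real_asymp+


lemma eta_pos: "eta x > 0" by (simp add: eta_def)

lemma eta_measurable[measurable]: "eta \<in> borel_measurable borel"
  unfolding eta_def[abs_def] by measurable

lemma integrable_exp_density: "integrable lborel (exponential_density 1)"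
proof (rule integrableI_nonneg)
  show "exponential_density 1 \<in> borel_measurable lborel" by measurable
  show "AE x in lborel. 0 \<le> exponential_density 1 x" by (simp add: exponential_density_nonneg)
  have "prob_space (density lborel (exponential_density 1))"
    by (rule prob_space_exponential_density) simp
  then have "emeasure (density lborel (exponential_density 1)) UNIV = 1"
    using prob_space.emeasure_space_1 by fastforce
  then have "(\<integral>\<^sup>+x. ennreal (exponential_density 1 x) \<partial>lborel) = 1"
    by (simp add: emeasure_density)
  then show "(\<integral>\<^sup>+x. ennreal (exponential_density 1 x) \<partial>lborel) < \<infinity>" by simp
qed

lemma eta_integrable: "integrable lborel eta"
proof (rule Bochner_Integration.integrable_bound)
  have "integrable lborel (\<lambda>x. exponential_density 1 (0 + (-1) * x))"
    using integrable_exp_density by (rule lborel_integrable_real_affine) simp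
  then show "integrable lborel (\<lambda>x. exponential_density 1 x + exponential_density 1 (0 + (-1) * x))"
    using integrable_exp_density by simp
  show "eta \<in> borel_measurable lborel" by simp
  show "AE x in lborel. norm (eta x) \<le> norm (exponential_density 1 x + exponential_density 1 (0 + (-1) * x))"
    by (intro AE_I2) (auto simp: eta_def exponential_density_def)
qed

lemma kk_sq_eta_bound:
  assumes a: "a > 0" and t: "\<tau> > 0" and at: "a * \<tau> \<le> 1"
  shows "(kk a \<tau> (y - x0))\<^sup>2 / eta y \<le> exp (1 + \<bar>x0\<bar>) / sqrt (pi*a*\<tau>) * kk a \<tau> (y - x0)"
proof -
  define z where "z = y - x0"
  define E where "E = exp (- z\<^sup>2 / (4*a*\<tau>))"
  define S where "S = sqrt (4*pi*a*\<tau>)"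
  have S: "S > 0" unfolding S_def using a t by simp
  have E: "E > 0" unfolding E_def by simp
  have S2: "sqrt (pi*a*\<tau>) = S / 2"
    unfolding S_def using a t by (simp add: real_sqrt_mult)
  have amgm: "\<bar>z\<bar> \<le> z\<^sup>2 / (4*a*\<tau>) + a*\<tau>"
  proof -
    have "0 \<le> (\<bar>z\<bar> - 2*a*\<tau>)\<^sup>2" by simp
    then have "4*a*\<tau> * \<bar>z\<bar> \<le> z\<^sup>2 + 4*(a*\<tau>)\<^sup>2"
      by (simp add: power2_eq_square algebra_simps)
    then show ?thesis using a t by (simp add: field_simps power2_eq_square)
  qed
  have key: "\<bar>y\<bar> - z\<^sup>2 / (4*a*\<tau>) \<le> 1 + \<bar>x0\<bar>"
    using amgm at unfolding z_def by linarith
  have "exp \<bar>y\<bar> * E \<le> exp (1 + \<bar>x0\<bar>)"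
    unfolding E_def by (simp add: exp_add[symmetric] key)
  then have "2 * exp \<bar>y\<bar> * E * E / (S * S) \<le> 2 * exp (1 + \<bar>x0\<bar>) * E / (S * S)"
    using E S by (auto simp: divide_simps mult.assoc intro!: mult_left_mono mult_right_mono)
  moreover have "(kk a \<tau> (y - x0))\<^sup>2 / eta y = 2 * exp \<bar>y\<bar> * E * E / (S * S)"
    unfolding kk_def eta_def E_def S_def z_def by (simp add: power2_eq_square exp_minus field_simps)
  moreover have "exp (1 + \<bar>x0\<bar>) / sqrt (pi*a*\<tau>) * kk a \<tau> (y - x0) = 2 * exp (1 + \<bar>x0\<bar>) * E / (S * S)"
    unfolding S2 unfolding kk_def E_def S_def z_def by simp
  ultimately show ?thesis by simp
qed

lemma kk_sq_eta_integrable: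
  assumes a: "a > 0" and t: "\<tau> > 0" and at: "a * \<tau> \<le> 1"
  shows "integrable lborel (\<lambda>y. (kk a \<tau> (y - x0))\<^sup>2 / eta y)"
    and "(\<integral>y. (kk a \<tau> (y - x0))\<^sup>2 / eta y \<partial>lborel) \<le> exp (1 + \<bar>x0\<bar>) / sqrt (pi*a*\<tau>)"
proof -
  have i: "integrable lborel (\<lambda>y. exp (1 + \<bar>x0\<bar>) / sqrt (pi*a*\<tau>) * kk a \<tau> (y - x0))"
    using kk_shift_integrable[OF a t] by simp
  show int: "integrable lborel (\<lambda>y. (kk a \<tau> (y - x0))\<^sup>2 / eta y)"
  proof (rule Bochner_Integration.integrable_bound[OF i])
    show "(\<lambda>y. (kk a \<tau> (y - x0))\<^sup>2 / eta y) \<in> borel_measurable lborel"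
      unfolding kk_def by measurable
    show "AE y in lborel. norm ((kk a \<tau> (y - x0))\<^sup>2 / eta y) \<le> norm (exp (1 + \<bar>x0\<bar>) / sqrt (pi*a*\<tau>) * kk a \<tau> (y - x0))"
    proof (intro AE_I2)
      fix y
      have "sqrt (pi*a*\<tau>) > 0" using a t by simp
      then show "norm ((kk a \<tau> (y - x0))\<^sup>2 / eta y) \<le> norm (exp (1 + \<bar>x0\<bar>) / sqrt (pi*a*\<tau>) * kk a \<tau> (y - x0))"
        using kk_sq_eta_bound[OF a t at, of y x0] eta_pos[of y] kk_pos[OF a t, of "y - x0"]
        by (simp add: abs_mult)
    qed
  qed
  have "(\<integral>y. (kk a \<tau> (y - x0))\<^sup>2 / eta y \<partial>lborel) \<le> (\<integral>y. exp (1 + \<bar>x0\<bar>) / sqrt (pi*a*\<tau>) * kk a \<tau> (y - x0) \<partial>lborel)"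
    by (intro integral_mono int i kk_sq_eta_bound[OF a t at])
  also have "\<dots> = exp (1 + \<bar>x0\<bar>) / sqrt (pi*a*\<tau>)"
    using kk_shift_integral[OF a t] by simp
  finally show "(\<integral>y. (kk a \<tau> (y - x0))\<^sup>2 / eta y \<partial>lborel) \<le> exp (1 + \<bar>x0\<bar>) / sqrt (pi*a*\<tau>)" .
qed

lemma amgm_weighted:
  fixes k g e eps :: real
  assumes "eps > 0" "e > 0"
  shows "\<bar>k * g\<bar> \<le> k\<^sup>2 / e / (2 * eps) + eps / 2 * (e * g\<^sup>2)"
proof -
  have "0 \<le> (\<bar>k\<bar> - eps * e * \<bar>g\<bar>)\<^sup>2" by simp
  then have "2 * eps * e * (\<bar>k\<bar> * \<bar>g\<bar>) \<le> k\<^sup>2 + (eps * e)\<^sup>2 * g\<^sup>2"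
    by (simp add: power2_eq_square algebra_simps)
  then show ?thesis using assms by (simp add: field_simps power2_eq_square abs_mult)
qed


lemma eta_sq_integrable:
  assumes g: "g \<in> borel_measurable lborel" and B: "\<And>y. \<bar>g y\<bar> \<le> B"
  shows "integrable lborel (\<lambda>y. eta y * (g y)\<^sup>2)"
proof (rule Bochner_Integration.integrable_bound)
  show "integrable lborel (\<lambda>y. eta y * B\<^sup>2)" using eta_integrable by simp
  show "(\<lambda>y. eta y * (g y)\<^sup>2) \<in> borel_measurable lborel" using g by measurable
  show "AE y in lborel. norm (eta y * (g y)\<^sup>2) \<le> norm (eta y * B\<^sup>2)"
  proof (intro AE_I2)
    fix y
    have "\<bar>g y\<bar> \<le> \<bar>B\<bar>" using B[of y] by linarith
    then have "(g y)\<^sup>2 \<le> B\<^sup>2" by (simp add: abs_le_square_iff)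
    then show "norm (eta y * (g y)\<^sup>2) \<le> norm (eta y * B\<^sup>2)"
      using eta_pos[of y] by (simp add: abs_mult)
  qed
qed

lemma kernel_pairing:
  assumes a: "a > 0" and t: "\<tau> > 0" and at: "a * \<tau> \<le> 1"
    and g: "g \<in> borel_measurable lborel" and B: "\<And>y. \<bar>g y\<bar> \<le> B" and eps: "eps > 0"
  shows "integrable lborel (\<lambda>y. kk a \<tau> (y - x0) * g y)"
    and "\<bar>\<integral>y. kk a \<tau> (y - x0) * g y \<partial>lborel\<bar>
         \<le> exp (1 + \<bar>x0\<bar>) / sqrt (pi*a*\<tau>) / (2 * eps) + eps / 2 * (\<integral>y. eta y * (g y)\<^sup>2 \<partial>lborel)"
proof -
  have kp: "\<And>y. kk a \<tau> y > 0" using kk_pos[OF a t] .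
  show int: "integrable lborel (\<lambda>y. kk a \<tau> (y - x0) * g y)"
  proof (rule Bochner_Integration.integrable_bound)
    show "integrable lborel (\<lambda>y. kk a \<tau> (y - x0) * B)" using kk_shift_integrable[OF a t] by simp
    show "(\<lambda>y. kk a \<tau> (y - x0) * g y) \<in> borel_measurable lborel" using g unfolding kk_def by measurable
    show "AE y in lborel. norm (kk a \<tau> (y - x0) * g y) \<le> norm (kk a \<tau> (y - x0) * B)"
    proof (intro AE_I2)
      fix y
      have "\<bar>g y\<bar> \<le> \<bar>B\<bar>" using B[of y] by linarith
      then show "norm (kk a \<tau> (y - x0) * g y) \<le> norm (kk a \<tau> (y - x0) * B)"
        using kp[of "y - x0"] by (simp add: abs_mult mult_left_mono)
    qed
  qed
  have i1: "integrable lborel (\<lambda>y. (kk a \<tau> (y - x0))\<^sup>2 / eta y)" by (rule kk_sq_eta_integrable[OF a t at])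
  have i2: "integrable lborel (\<lambda>y. eta y * (g y)\<^sup>2)" by (rule eta_sq_integrable[OF g B])
  have "\<bar>\<integral>y. kk a \<tau> (y - x0) * g y \<partial>lborel\<bar> \<le> (\<integral>y. \<bar>kk a \<tau> (y - x0) * g y\<bar> \<partial>lborel)"
    using integral_norm_bound[of lborel "\<lambda>y. kk a \<tau> (y - x0) * g y"] by simp
  also have "\<dots> \<le> (\<integral>y. (kk a \<tau> (y - x0))\<^sup>2 / eta y / (2 * eps) + eps / 2 * (eta y * (g y)\<^sup>2) \<partial>lborel)"
  proof (intro integral_mono amgm_weighted eps eta_pos)
    show "integrable lborel (\<lambda>y. \<bar>kk a \<tau> (y - x0) * g y\<bar>)" using int by simp
    show "integrable lborel (\<lambda>y. (kk a \<tau> (y - x0))\<^sup>2 / eta y / (2 * eps) + eps / 2 * (eta y * (g y)\<^sup>2))"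
      by (intro Bochner_Integration.integrable_add integrable_divide integrable_mult_right i1 i2)
  qed
  also have "\<dots> = (\<integral>y. (kk a \<tau> (y - x0))\<^sup>2 / eta y \<partial>lborel) / (2 * eps) + eps / 2 * (\<integral>y. eta y * (g y)\<^sup>2 \<partial>lborel)"
    by (simp only: Bochner_Integration.integral_add[OF integrable_divide[OF i1] integrable_mult_right[OF i2]]
          integral_divide_zero integral_mult_right_zero)
  also have "\<dots> \<le> exp (1 + \<bar>x0\<bar>) / sqrt (pi*a*\<tau>) / (2 * eps) + eps / 2 * (\<integral>y. eta y * (g y)\<^sup>2 \<partial>lborel)"
    using divide_right_mono[OF kk_sq_eta_integrable(2)[OF a t at, of x0], of "2 * eps"] eps by simp
  finally show "\<bar>\<integral>y. kk a \<tau> (y - x0) * g y \<partial>lborel\<bar>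
         \<le> exp (1 + \<bar>x0\<bar>) / sqrt (pi*a*\<tau>) / (2 * eps) + eps / 2 * (\<integral>y. eta y * (g y)\<^sup>2 \<partial>lborel)" .
qed


definition "kz a \<tau> z = - z / (2*a*\<tau>) * kk a \<tau> z"
definition "kzz a \<tau> z = (z\<^sup>2 / (4*a\<^sup>2*\<tau>\<^sup>2) - 1 / (2*a*\<tau>)) * kk a \<tau> z"

lemma kk_shift_deriv_y:
  assumes "a > 0" "\<tau> > 0"
  shows "((\<lambda>y. kk a \<tau> (y - x0)) has_real_derivative kz a \<tau> (y - x0)) (at y)"
proof -
  have d: "((\<lambda>y. y - x0) has_real_derivative 1) (at y)" by (auto intro!: derivative_eq_intros)
  show ?thesis using DERIV_chain2[OF kk_deriv_z[OF assms, of "y - x0"] d] by (simp add: kz_def)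
qed

lemma kz_shift_deriv_y:
  assumes "a > 0" "\<tau> > 0"
  shows "((\<lambda>y. kz a \<tau> (y - x0)) has_real_derivative kzz a \<tau> (y - x0)) (at y)"
proof -
  have d: "((\<lambda>y. y - x0) has_real_derivative 1) (at y)" by (auto intro!: derivative_eq_intros)
  show ?thesis using DERIV_chain2[OF kk_deriv_zz[OF assms, of "y - x0"] d] by (simp add: kz_def kzz_def)
qed

lemma kk_back_deriv_s:
  assumes "a > 0" "s < t0"
  shows "((\<lambda>s. kk a (t0 - s) z) has_real_derivative - a * kzz a (t0 - s) z) (at s)"
proof -
  have "((\<lambda>s. kk a (t0 - s) z) has_real_derivative (a * kzz a (t0 - s) z) * (-1)) (at s)"
  proof -
    have p: "t0 - s > 0" using assms by simp
    show ?thesis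
    proof -
      have d: "((\<lambda>s. t0 - s) has_real_derivative -1) (at s)" by (auto intro!: derivative_eq_intros)
      show ?thesis using DERIV_chain2[OF kk_deriv_t[OF assms(1) p, of z] d] by (simp add: kzz_def)
    qed
  qed
  then show ?thesis by simp
qed

lemma kk_cont_t:
  assumes "a > 0" "\<tau> > 0"
  shows "isCont (\<lambda>\<tau>. kk a \<tau> z) \<tau>"
  using kk_deriv_t[OF assms] by (rule DERIV_isCont)

lemma kzz_bound:
  assumes a: "a > 0" and t: "0 < \<tau>1" "\<tau>1 \<le> \<tau>" "\<tau> \<le> \<tau>2"
  shows "\<bar>kzz a \<tau> z\<bar> \<le> (z\<^sup>2 / (4*a\<^sup>2*\<tau>1\<^sup>2) + 1 / (2*a*\<tau>1)) * (sqrt (\<tau>2 / \<tau>1) * kk a \<tau>2 z)"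
proof -
  have "\<bar>z\<^sup>2 / (4*a\<^sup>2*\<tau>\<^sup>2) - 1 / (2*a*\<tau>)\<bar> \<le> z\<^sup>2 / (4*a\<^sup>2*\<tau>\<^sup>2) + 1 / (2*a*\<tau>)"
    using a t by (auto simp: abs_if)
  also have "\<dots> \<le> z\<^sup>2 / (4*a\<^sup>2*\<tau>1\<^sup>2) + 1 / (2*a*\<tau>1)"
    using a t by (intro add_mono divide_left_mono mult_left_mono mult_right_mono power_mono) auto
  finally have 1: "\<bar>z\<^sup>2 / (4*a\<^sup>2*\<tau>\<^sup>2) - 1 / (2*a*\<tau>)\<bar> \<le> z\<^sup>2 / (4*a\<^sup>2*\<tau>1\<^sup>2) + 1 / (2*a*\<tau>1)" .
  have 2: "\<bar>kk a \<tau> z\<bar> \<le> sqrt (\<tau>2 / \<tau>1) * kk a \<tau>2 z"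
    using kk_mono_bound[OF a t] kk_pos[of a \<tau> z] a t by simp
  show ?thesis unfolding kzz_def abs_mult
    by (rule mult_mono[OF 1 2]) (use a t in auto)
qed

lemma kk_bound_abs:
  assumes a: "a > 0" and t: "0 < \<tau>1" "\<tau>1 \<le> \<tau>" "\<tau> \<le> \<tau>2"
  shows "\<bar>kk a \<tau> z\<bar> \<le> sqrt (\<tau>2 / \<tau>1) * kk a \<tau>2 z"
  using kk_mono_bound[OF a t] kk_pos[of a \<tau> z] a t by simp

lemma kk_lim_shift:
  assumes "a > 0" "\<tau> > 0"
  shows "((\<lambda>y. kk a \<tau> (y - x0)) \<longlongrightarrow> 0) at_top" "((\<lambda>y. kk a \<tau> (y - x0)) \<longlongrightarrow> 0) at_bot"
    "((\<lambda>y. kz a \<tau> (y - x0)) \<longlongrightarrow> 0) at_top" "((\<lambda>y. kz a \<tau> (y - x0)) \<longlongrightarrow> 0) at_bot"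
proof -
  have t: "filterlim (\<lambda>y::real. y - x0) at_top at_top" by real_asymp
  have b: "filterlim (\<lambda>y::real. y - x0) at_bot at_bot" by real_asymp
  note L = kk_lim[OF assms]
  show "((\<lambda>y. kk a \<tau> (y - x0)) \<longlongrightarrow> 0) at_top" using filterlim_compose[OF L(1) t] .
  show "((\<lambda>y. kk a \<tau> (y - x0)) \<longlongrightarrow> 0) at_bot" using filterlim_compose[OF L(2) b] .
  show "((\<lambda>y. kz a \<tau> (y - x0)) \<longlongrightarrow> 0) at_top" using filterlim_compose[OF L(3) t] unfolding kz_def .
  show "((\<lambda>y. kz a \<tau> (y - x0)) \<longlongrightarrow> 0) at_bot" using filterlim_compose[OF L(4) b] unfolding kz_def .
qed

lemma kzz_cont: "a > 0 \<Longrightarrow> \<tau> > 0 \<Longrightarrow> continuous_on UNIV (\<lambda>y. kzz a \<tau> (y - x0))"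
  unfolding kzz_def kk_def by (intro continuous_intros) auto

lemma kk_meas[measurable]: "(\<lambda>y. kk a \<tau> (y - x0)) \<in> borel_measurable borel"
  unfolding kk_def by measurable

lemma kzz_meas[measurable]: "(\<lambda>y. kzz a \<tau> (y - x0)) \<in> borel_measurable borel"
  unfolding kzz_def kk_def by measurable


locale heat =
  fixes a :: real and v vt vx vxx f :: "real \<Rightarrow> real \<Rightarrow> real" and Bv Bt Bx Bxx t0 x0 :: real
  assumes a_pos: "0 < a" and a_le: "a \<le> 1"
    and cv: "continuous_on ({-1..0} \<times> UNIV) (\<lambda>(t,x). v t x)"
    and cvt: "continuous_on ({-1<..<0} \<times> UNIV) (\<lambda>(t,x). vt t x)"
    and cvxx: "continuous_on ({-1<..<0} \<times> UNIV) (\<lambda>(t,x). vxx t x)"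
    and dvt: "\<And>t x. t \<in> {-1<..<0} \<Longrightarrow> ((\<lambda>s. v s x) has_real_derivative vt t x) (at t)"
    and dvx: "\<And>t x. t \<in> {-1<..<0} \<Longrightarrow> ((\<lambda>y. v t y) has_real_derivative vx t x) (at x)"
    and dvxx: "\<And>t x. t \<in> {-1<..<0} \<Longrightarrow> ((\<lambda>y. vx t y) has_real_derivative vxx t x) (at x)"
    and pde: "\<And>t x. t \<in> {-1<..<0} \<Longrightarrow> vt t x - a * vxx t x = f t x"
    and Bv: "\<And>t x. t \<in> {-1..0} \<Longrightarrow> \<bar>v t x\<bar> \<le> Bv"
    and Bt: "\<And>t x. t \<in> {-1<..<0} \<Longrightarrow> \<bar>vt t x\<bar> \<le> Bt"
    and Bx: "\<And>t x. t \<in> {-1<..<0} \<Longrightarrow> \<bar>vx t x\<bar> \<le> Bx"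
    and Bxx: "\<And>t x. t \<in> {-1<..<0} \<Longrightarrow> \<bar>vxx t x\<bar> \<le> Bxx"
    and t0: "-1 < t0" "t0 < 0"
begin

lemma cont_slice:
  assumes "continuous_on (S \<times> UNIV) (\<lambda>(t,x). w t x)" "t \<in> S"
  shows "continuous_on UNIV (w t)"
proof -
  have "continuous_on UNIV (\<lambda>y. (\<lambda>(t,x). w t x) (t, y))"
    by (rule continuous_on_compose2[OF assms(1)]) (use assms(2) in \<open>auto intro!: continuous_intros\<close>)
  then show ?thesis by simp
qed

lemma v_cont: "t \<in> {-1..0} \<Longrightarrow> continuous_on UNIV (v t)"
  using cont_slice[OF cv] .

lemma vt_cont: "t \<in> {-1<..<0} \<Longrightarrow> continuous_on UNIV (vt t)"
  using cont_slice[OF cvt] .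

lemma vxx_cont: "t \<in> {-1<..<0} \<Longrightarrow> continuous_on UNIV (vxx t)"
  using cont_slice[OF cvxx] .

lemma f_eq: "t \<in> {-1<..<0} \<Longrightarrow> f t x = vt t x - a * vxx t x"
  using pde by simp

lemma f_cont: "t \<in> {-1<..<0} \<Longrightarrow> continuous_on UNIV (f t)"
proof -
  assume t: "t \<in> {-1<..<0}"
  have "continuous_on UNIV (\<lambda>x. vt t x - a * vxx t x)"
    using vt_cont[OF t] vxx_cont[OF t] by (intro continuous_intros) auto
  moreover have "f t = (\<lambda>x. vt t x - a * vxx t x)" using f_eq[OF t] by auto
  ultimately show ?thesis by simp
qed

lemma v_meas: "t \<in> {-1..0} \<Longrightarrow> v t \<in> borel_measurable lborel"
  using v_cont by (simp add: borel_measurable_continuous_onI)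
lemma vt_meas: "t \<in> {-1<..<0} \<Longrightarrow> vt t \<in> borel_measurable lborel"
  using vt_cont by (simp add: borel_measurable_continuous_onI)
lemma vxx_meas: "t \<in> {-1<..<0} \<Longrightarrow> vxx t \<in> borel_measurable lborel"
  using vxx_cont by (simp add: borel_measurable_continuous_onI)
lemma f_meas: "t \<in> {-1<..<0} \<Longrightarrow> f t \<in> borel_measurable lborel"
  using f_cont by (simp add: borel_measurable_continuous_onI)

definition "Bf = Bt + Bxx"

lemma Bf: "t \<in> {-1<..<0} \<Longrightarrow> \<bar>f t x\<bar> \<le> Bf"
proof -
  assume t: "t \<in> {-1<..<0}"
  have "\<bar>a * vxx t x\<bar> \<le> Bxx"
  proof -
    have "a * \<bar>vxx t x\<bar> \<le> 1 * \<bar>vxx t x\<bar>" using a_le by (intro mult_right_mono) auto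
    then show ?thesis using Bxx[OF t, of x] a_pos by (simp add: abs_mult)
  qed
  then show ?thesis using f_eq[OF t, of x] Bt[OF t, of x] unfolding Bf_def by linarith
qed

definition "phi s y = kk a (t0 - s) (y - x0)"
definition "Phi s = (\<integral>y. phi s y * v s y \<partial>lborel)"
definition "psi s = (\<integral>y. phi s y * f s y \<partial>lborel)"

end


lemma kk_w_int:
  assumes a: "a > 0" and t: "\<tau> > 0" and w: "w \<in> borel_measurable lborel" and B: "\<And>y. \<bar>w y\<bar> \<le> B"
  shows "integrable lborel (\<lambda>y. kk a \<tau> (y - x0) * w y)"
proof (rule Bochner_Integration.integrable_bound)
  show "integrable lborel (\<lambda>y. kk a \<tau> (y - x0) * B)" using kk_shift_integrable[OF a t] by simp
  show "(\<lambda>y. kk a \<tau> (y - x0) * w y) \<in> borel_measurable lborel" using w by measurable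
  show "AE y in lborel. norm (kk a \<tau> (y - x0) * w y) \<le> norm (kk a \<tau> (y - x0) * B)"
  proof (intro AE_I2)
    fix y
    have "\<bar>w y\<bar> \<le> \<bar>B\<bar>" using B[of y] by linarith
    then show "norm (kk a \<tau> (y - x0) * w y) \<le> norm (kk a \<tau> (y - x0) * B)"
      using kk_pos[OF a t, of "y - x0"] by (simp add: abs_mult mult_left_mono)
  qed
qed

lemma moment_comb_int:
  assumes a: "a > 0" and t: "\<tau> > 0"
  shows "integrable lborel (\<lambda>y. (A * (y - x0)\<^sup>2 + C) * kk a \<tau> (y - x0))"
proof -
  have "integrable lborel (\<lambda>y. A * (kk a \<tau> (y - x0) * \<bar>y - x0\<bar>^2) + C * kk a \<tau> (y - x0))"
    using kk_shift_moment[OF a t, of x0 2] kk_shift_integrable[OF a t, of x0] by simp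
  then show ?thesis by (simp add: algebra_simps power2_abs)
qed

lemma kzz_w_int:
  assumes a: "a > 0" and t: "\<tau> > 0" and w: "w \<in> borel_measurable lborel" and B: "\<And>y. \<bar>w y\<bar> \<le> B"
  shows "integrable lborel (\<lambda>y. kzz a \<tau> (y - x0) * w y)"
proof (rule Bochner_Integration.integrable_bound)
  show "integrable lborel (\<lambda>y. (\<bar>B\<bar> / (4*a\<^sup>2*\<tau>\<^sup>2) * (y - x0)\<^sup>2 + \<bar>B\<bar> / (2*a*\<tau>)) * kk a \<tau> (y - x0))"
    by (rule moment_comb_int[OF a t])
  show "(\<lambda>y. kzz a \<tau> (y - x0) * w y) \<in> borel_measurable lborel" using w by measurable
  show "AE y in lborel. norm (kzz a \<tau> (y - x0) * w y) \<le> norm ((\<bar>B\<bar> / (4*a\<^sup>2*\<tau>\<^sup>2) * (y - x0)\<^sup>2 + \<bar>B\<bar> / (2*a*\<tau>)) * kk a \<tau> (y - x0))"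
  proof (intro AE_I2)
    fix y
    have wB: "\<bar>w y\<bar> \<le> \<bar>B\<bar>" using B[of y] by linarith
    have k: "\<bar>kzz a \<tau> (y - x0)\<bar> \<le> ((y - x0)\<^sup>2 / (4*a\<^sup>2*\<tau>\<^sup>2) + 1 / (2*a*\<tau>)) * (sqrt (\<tau> / \<tau>) * kk a \<tau> (y - x0))"
      by (rule kzz_bound[OF a t]) auto
    have kp: "kk a \<tau> (y - x0) > 0" using kk_pos[OF a t] .
    have "\<bar>kzz a \<tau> (y - x0) * w y\<bar> \<le> (((y - x0)\<^sup>2 / (4*a\<^sup>2*\<tau>\<^sup>2) + 1 / (2*a*\<tau>)) * kk a \<tau> (y - x0)) * \<bar>B\<bar>"
      unfolding abs_mult using k t by (intro mult_mono wB) auto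
    also have "\<dots> = (\<bar>B\<bar> / (4*a\<^sup>2*\<tau>\<^sup>2) * (y - x0)\<^sup>2 + \<bar>B\<bar> / (2*a*\<tau>)) * kk a \<tau> (y - x0)"
      by (simp add: field_simps)
    also have "\<dots> \<le> norm ((\<bar>B\<bar> / (4*a\<^sup>2*\<tau>\<^sup>2) * (y - x0)\<^sup>2 + \<bar>B\<bar> / (2*a*\<tau>)) * kk a \<tau> (y - x0))"
      unfolding real_norm_def by (rule abs_ge_self)
    finally show "norm (kzz a \<tau> (y - x0) * w y) \<le> norm ((\<bar>B\<bar> / (4*a\<^sup>2*\<tau>\<^sup>2) * (y - x0)\<^sup>2 + \<bar>B\<bar> / (2*a*\<tau>)) * kk a \<tau> (y - x0))"
      by simp
  qed
qed


context heat begin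

lemma ibp_step:
  assumes s: "s \<in> {-1<..<0}" and tau: "\<tau> > 0"
  shows "(\<integral>y. kk a \<tau> (y - x0) * vxx s y - kzz a \<tau> (y - x0) * v s y \<partial>lborel) = 0"
proof (rule ibp_R)
  show "\<And>y. ((\<lambda>y. kk a \<tau> (y - x0)) has_real_derivative kz a \<tau> (y - x0)) (at y)"
    by (rule kk_shift_deriv_y[OF a_pos tau])
  show "\<And>y. ((\<lambda>y. kz a \<tau> (y - x0)) has_real_derivative kzz a \<tau> (y - x0)) (at y)"
    by (rule kz_shift_deriv_y[OF a_pos tau])
  show "\<And>y. (v s has_real_derivative vx s y) (at y)" using dvx[OF s] by simp
  show "\<And>y. (vx s has_real_derivative vxx s y) (at y)" using dvxx[OF s] by simp
  show "continuous_on UNIV (vxx s)" by (rule vxx_cont[OF s])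
  show "continuous_on UNIV (\<lambda>y. kzz a \<tau> (y - x0))" by (rule kzz_cont[OF a_pos tau])
  show "\<And>y. \<bar>v s y\<bar> \<le> max Bv Bx" using Bv s by (force intro: max.coboundedI1)
  show "\<And>y. \<bar>vx s y\<bar> \<le> max Bv Bx" using Bx s by (force intro: max.coboundedI2)
  show "((\<lambda>y. kk a \<tau> (y - x0)) \<longlongrightarrow> 0) at_top" "((\<lambda>y. kk a \<tau> (y - x0)) \<longlongrightarrow> 0) at_bot"
    "((\<lambda>y. kz a \<tau> (y - x0)) \<longlongrightarrow> 0) at_top" "((\<lambda>y. kz a \<tau> (y - x0)) \<longlongrightarrow> 0) at_bot"
    using kk_lim_shift[OF a_pos tau] by auto
  have s': "s \<in> {-1..0}" using s by auto
  show "integrable lborel (\<lambda>y. kk a \<tau> (y - x0) * vxx s y - kzz a \<tau> (y - x0) * v s y)"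
    by (rule Bochner_Integration.integrable_diff[OF kk_w_int[OF a_pos tau vxx_meas[OF s] Bxx[OF s]]
          kzz_w_int[OF a_pos tau v_meas[OF s'] Bv[OF s']]])
qed

lemma Phi_deriv:
  assumes s: "s \<in> {-1<..<t0}"
  shows "(Phi has_real_derivative psi s) (at s)"
proof -
  define c where "c = (s - 1) / 2"
  define d where "d = (s + t0) / 2"
  define \<tau>1 where "\<tau>1 = t0 - d"
  define \<tau>2 where "\<tau>2 = t0 - c"
  have cd: "-1 < c" "c < s" "s < d" "d < t0" using s t0 unfolding c_def d_def by auto
  have tau: "0 < \<tau>1" "\<tau>1 \<le> \<tau>2" using cd unfolding \<tau>1_def \<tau>2_def by auto
  have inI: "t \<in> {-1<..<0}" "t \<in> {-1..0}" if "t \<in> {c<..<d}" for t using that cd t0 by auto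
  have taut: "\<tau>1 \<le> t0 - t" "t0 - t \<le> \<tau>2" "t < t0" if "t \<in> {c<..<d}" for t
    using that cd unfolding \<tau>1_def \<tau>2_def by auto
  define u where "u t y = phi t y * v t y" for t y
  define u' where "u' t y = (- a * kzz a (t0 - t) (y - x0)) * v t y + phi t y * vt t y" for t y
  define g where "g y = (a * \<bar>Bv\<bar> / (4*a\<^sup>2*\<tau>1\<^sup>2) * sqrt (\<tau>2 / \<tau>1) * (y - x0)\<^sup>2
      + (a * \<bar>Bv\<bar> / (2*a*\<tau>1) * sqrt (\<tau>2 / \<tau>1) + \<bar>Bt\<bar> * sqrt (\<tau>2 / \<tau>1))) * kk a \<tau>2 (y - x0)" for y
  have "((\<lambda>t. \<integral>y. u t y \<partial>lborel) has_real_derivative (\<integral>y. u' s y \<partial>lborel)) (at s)"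
  proof (rule deriv_under_integral[where c=c and d=d and g=g])
    show "c < s" "s < d" using cd by auto
    show "((\<lambda>t. u t y) has_real_derivative u' t y) (at t)" if t: "t \<in> {c<..<d}" for t y
    proof -
      have "((\<lambda>t. phi t y * v t y) has_real_derivative
          (- a * kzz a (t0 - t) (y - x0)) * v t y + phi t y * vt t y) (at t)"
        unfolding phi_def
        using DERIV_mult[OF kk_back_deriv_s[OF a_pos taut(3)[OF t], of "y - x0"] dvt[OF inI(1)[OF t], of y]] by (simp add: mult.commute)
      then show ?thesis unfolding u_def u'_def by simp
    qed
    show "u t \<in> borel_measurable lborel" if t: "t \<in> {c<..<d}" for t
      using v_meas[OF inI(2)[OF t]] unfolding u_def phi_def by measurable
    show "integrable lborel (u t)" if t: "t \<in> {c<..<d}" for t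
    proof -
      have "0 < t0 - t" using taut(3)[OF t] by simp
      from kk_w_int[OF a_pos this v_meas[OF inI(2)[OF t]] Bv[OF inI(2)[OF t]]]
      show ?thesis unfolding u_def phi_def by simp
    qed
    have sI: "s \<in> {-1<..<0}" "s \<in> {-1..0}" using s t0 by auto
    show "u' s \<in> borel_measurable lborel"
      using v_meas[OF sI(2)] vt_meas[OF sI(1)] unfolding u'_def phi_def by measurable
    show "integrable lborel g"
      unfolding g_def using tau by (intro moment_comb_int a_pos) auto
    show "\<bar>u' t y\<bar> \<le> g y" if t: "t \<in> {c<..<d}" for t y
    proof -
      have k1: "\<bar>kzz a (t0 - t) (y - x0)\<bar> \<le> ((y - x0)\<^sup>2 / (4*a\<^sup>2*\<tau>1\<^sup>2) + 1 / (2*a*\<tau>1)) * (sqrt (\<tau>2 / \<tau>1) * kk a \<tau>2 (y - x0))"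
        by (rule kzz_bound[OF a_pos tau(1) taut(1,2)[OF t]])
      have k2: "\<bar>phi t y\<bar> \<le> sqrt (\<tau>2 / \<tau>1) * kk a \<tau>2 (y - x0)"
        unfolding phi_def by (rule kk_bound_abs[OF a_pos tau(1) taut(1,2)[OF t]])
      have vb: "\<bar>v t y\<bar> \<le> \<bar>Bv\<bar>" using Bv[OF inI(2)[OF t], of y] by linarith
      have vtb: "\<bar>vt t y\<bar> \<le> \<bar>Bt\<bar>" using Bt[OF inI(1)[OF t], of y] by linarith
      have kp: "kk a \<tau>2 (y - x0) > 0" using kk_pos[OF a_pos] tau by auto
      have "\<bar>u' t y\<bar> \<le> a * \<bar>kzz a (t0 - t) (y - x0)\<bar> * \<bar>v t y\<bar> + \<bar>phi t y\<bar> * \<bar>vt t y\<bar>"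
      proof -
        have "\<bar>u' t y\<bar> \<le> \<bar>(- a * kzz a (t0 - t) (y - x0)) * v t y\<bar> + \<bar>phi t y * vt t y\<bar>"
          unfolding u'_def by (rule abs_triangle_ineq)
        then show ?thesis using a_pos by (simp add: abs_mult)
      qed
      also have "\<dots> \<le> a * (((y - x0)\<^sup>2 / (4*a\<^sup>2*\<tau>1\<^sup>2) + 1 / (2*a*\<tau>1)) * (sqrt (\<tau>2 / \<tau>1) * kk a \<tau>2 (y - x0))) * \<bar>Bv\<bar>
          + (sqrt (\<tau>2 / \<tau>1) * kk a \<tau>2 (y - x0)) * \<bar>Bt\<bar>"
        using a_pos tau kp by (intro add_mono mult_mono k1 k2 vb vtb mult_left_mono) (auto intro!: mult_nonneg_nonneg add_nonneg_nonneg)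
      also have "\<dots> = g y" unfolding g_def using a_pos tau by (simp add: field_simps power2_eq_square)
      finally show ?thesis .
    qed
  qed
  moreover have "(\<lambda>t. \<integral>y. u t y \<partial>lborel) = Phi" unfolding u_def Phi_def by simp
  moreover have "(\<integral>y. u' s y \<partial>lborel) = psi s"
  proof -
    have sI: "s \<in> {-1<..<0}" "s \<in> {-1..0}" using s t0 by auto
    have tp: "t0 - s > 0" using s by auto
    have eq: "u' s y = phi s y * f s y + a * (kk a (t0 - s) (y - x0) * vxx s y - kzz a (t0 - s) (y - x0) * v s y)" for y
      unfolding u'_def phi_def f_eq[OF sI(1)] by (simp add: algebra_simps)
    have i1: "integrable lborel (\<lambda>y. phi s y * f s y)"
      unfolding phi_def by (rule kk_w_int[OF a_pos tp f_meas[OF sI(1)] Bf[OF sI(1)]])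
    have i2: "integrable lborel (\<lambda>y. kk a (t0 - s) (y - x0) * vxx s y - kzz a (t0 - s) (y - x0) * v s y)"
      by (rule Bochner_Integration.integrable_diff[OF kk_w_int[OF a_pos tp vxx_meas[OF sI(1)] Bxx[OF sI(1)]]
          kzz_w_int[OF a_pos tp v_meas[OF sI(2)] Bv[OF sI(2)]]])
    have "(\<integral>y. u' s y \<partial>lborel) = (\<integral>y. phi s y * f s y \<partial>lborel)
        + a * (\<integral>y. kk a (t0 - s) (y - x0) * vxx s y - kzz a (t0 - s) (y - x0) * v s y \<partial>lborel)"
      unfolding eq using i1 i2 by simp
    also have "\<dots> = psi s" using ibp_step[OF sI(1) tp] unfolding psi_def by simp
    finally show ?thesis .
  qed
  ultimately show ?thesis by simp
qed

end


context heat begin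

lemma v_tendsto_t:
  assumes "t \<in> {-1..0}"
  shows "((\<lambda>s. v s y) \<longlongrightarrow> v t y) (at t within {-1..0})"
proof -
  have "continuous_on {-1..0} (\<lambda>s. (\<lambda>(t,x). v t x) (s, y))"
    by (rule continuous_on_compose2[OF cv]) (auto intro!: continuous_intros)
  then show ?thesis using assms unfolding continuous_on_def by auto
qed

lemma Phi_cont_m1: "(Phi \<longlongrightarrow> Phi (-1)) (at (-1) within {-1..t0})"
proof -
  define \<tau>1 where "\<tau>1 = (t0 + 1) / 2"
  define \<tau>2 where "\<tau>2 = t0 + 1"
  have tau: "0 < \<tau>1" "\<tau>1 \<le> \<tau>2" using t0 unfolding \<tau>1_def \<tau>2_def by auto
  have ev: "eventually (\<lambda>t. t \<in> {-1..0} \<and> \<tau>1 \<le> t0 - t \<and> t0 - t \<le> \<tau>2) (at (-1) within {-1..t0})"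
    unfolding eventually_at using t0
    by (intro exI[of _ "(t0 + 1) / 2"]) (auto simp: \<tau>1_def \<tau>2_def dist_real_def)
  have "((\<lambda>t. \<integral>y. phi t y * v t y \<partial>lborel) \<longlongrightarrow> (\<integral>y. phi (-1) y * v (-1) y \<partial>lborel)) (at (-1) within {-1..t0})"
  proof (rule dct_at[where w="\<lambda>y. \<bar>Bv\<bar> * (sqrt (\<tau>2 / \<tau>1) * kk a \<tau>2 (y - x0))"])
    show "eventually (\<lambda>t. (\<lambda>y. phi t y * v t y) \<in> borel_measurable lborel \<and>
        (\<forall>y. \<bar>phi t y * v t y\<bar> \<le> \<bar>Bv\<bar> * (sqrt (\<tau>2 / \<tau>1) * kk a \<tau>2 (y - x0)))) (at (-1) within {-1..t0})"
      using ev
    proof eventually_elim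
      case (elim t)
      have m: "(\<lambda>y. phi t y * v t y) \<in> borel_measurable lborel"
      proof -
        have "v t \<in> borel_measurable lborel" using v_meas elim by auto
        then show ?thesis unfolding phi_def by measurable
      qed
      have "\<bar>phi t y * v t y\<bar> \<le> \<bar>Bv\<bar> * (sqrt (\<tau>2 / \<tau>1) * kk a \<tau>2 (y - x0))" for y
      proof -
        have "\<bar>v t y\<bar> \<le> \<bar>Bv\<bar>" using Bv[of t y] elim by linarith
        moreover have "\<bar>phi t y\<bar> \<le> sqrt (\<tau>2 / \<tau>1) * kk a \<tau>2 (y - x0)"
          unfolding phi_def using elim by (intro kk_bound_abs a_pos tau) auto
        ultimately show ?thesis unfolding abs_mult by (simp add: mult_mono' mult.commute)
      qed
      then show ?case using m by auto
    qed
    show "(\<lambda>y. phi (-1) y * v (-1) y) \<in> borel_measurable lborel"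
      using v_meas[of "-1"] unfolding phi_def by measurable
    show "integrable lborel (\<lambda>y. \<bar>Bv\<bar> * (sqrt (\<tau>2 / \<tau>1) * kk a \<tau>2 (y - x0)))"
      using kk_shift_integrable[OF a_pos, of \<tau>2 x0] tau by simp
    fix y
    have "isCont (\<lambda>\<tau>. kk a \<tau> (y - x0)) (t0 - (-1))" using kk_cont_t[OF a_pos] t0 by simp
    then have "((\<lambda>t. kk a (t0 - t) (y - x0)) \<longlongrightarrow> kk a (t0 - (-1)) (y - x0)) (at (-1) within {-1..t0})"
    proof (rule isCont_tendsto_compose[where g="\<lambda>\<tau>. kk a \<tau> (y - x0)"])
      show "((\<lambda>t. t0 - t) \<longlongrightarrow> t0 - (-1)) (at (-1) within {-1..t0})" by (intro tendsto_intros)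
    qed
    moreover have "((\<lambda>t. v t y) \<longlongrightarrow> v (-1) y) (at (-1) within {-1..t0})"
      by (rule tendsto_within_subset[OF v_tendsto_t]) (use t0 in auto)
    ultimately show "((\<lambda>t. phi t y * v t y) \<longlongrightarrow> phi (-1) y * v (-1) y) (at (-1) within {-1..t0})"
      unfolding phi_def by (rule tendsto_mult)
  qed
  then show ?thesis unfolding Phi_def by simp
qed

end


lemma normal_density_affine:
  assumes "\<sigma> > 0"
  shows "normal_density x0 \<sigma> (x0 + \<sigma> * w) = std_normal_density w / \<sigma>"
  using assms by (simp add: normal_density_def real_sqrt_mult power_mult_distrib field_simps)

context heat begin

definition "sig s = sqrt (2 * a * (t0 - s))"

lemma Phi_subst:
  assumes s: "s < t0"
  shows "Phi s = (\<integral>w. std_normal_density w * v s (x0 + sig s * w) \<partial>lborel)"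
proof -
  have sp: "sig s > 0" unfolding sig_def using s a_pos by simp
  have "Phi s = (\<integral>y. normal_density x0 (sig s) y * v s y \<partial>lborel)"
    unfolding Phi_def phi_def sig_def using kk_normal_shift[OF a_pos, of "t0 - s"] s by simp
  also have "\<dots> = \<bar>sig s\<bar> *\<^sub>R (\<integral>w. normal_density x0 (sig s) (x0 + sig s * w) * v s (x0 + sig s * w) \<partial>lborel)"
    using sp by (intro lborel_integral_real_affine) simp
  also have "\<dots> = (\<integral>w. std_normal_density w * v s (x0 + sig s * w) \<partial>lborel)"
    using sp by (simp add: normal_density_affine)
  finally show ?thesis .
qed

lemma Phi_lim_t0: "(Phi \<longlongrightarrow> v t0 x0) (at t0 within {-1..t0})"
proof -
  have ev: "eventually (\<lambda>t. t \<in> {-1..t0} \<and> t < t0) (at t0 within {-1..t0})"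
    unfolding eventually_at_filter by (intro always_eventually) auto
  have lim: "((\<lambda>t. \<integral>w. std_normal_density w * v t (x0 + sig t * w) \<partial>lborel) \<longlongrightarrow>
      (\<integral>w. std_normal_density w * v t0 x0 \<partial>lborel)) (at t0 within {-1..t0})"
  proof (rule dct_at[where w="\<lambda>w. std_normal_density w * \<bar>Bv\<bar>"])
    show "eventually (\<lambda>t. (\<lambda>w. std_normal_density w * v t (x0 + sig t * w)) \<in> borel_measurable lborel \<and>
        (\<forall>w. \<bar>std_normal_density w * v t (x0 + sig t * w)\<bar> \<le> std_normal_density w * \<bar>Bv\<bar>)) (at t0 within {-1..t0})"
      using ev
    proof eventually_elim
      case (elim t)
      have tI: "t \<in> {-1..0}" using elim t0 by auto
      have vm: "v t \<in> borel_measurable borel" using v_meas[OF tI] by simp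
      have m: "(\<lambda>w. std_normal_density w * v t (x0 + sig t * w)) \<in> borel_measurable lborel"
        using vm by measurable
      have "\<bar>std_normal_density w * v t (x0 + sig t * w)\<bar> \<le> std_normal_density w * \<bar>Bv\<bar>" for w
      proof -
        have "\<bar>v t (x0 + sig t * w)\<bar> \<le> \<bar>Bv\<bar>" using Bv[OF tI, of "x0 + sig t * w"] by linarith
        then show ?thesis by (simp add: abs_mult mult_left_mono)
      qed
      then show ?case using m by auto
    qed
    show "(\<lambda>w. std_normal_density w * v t0 x0) \<in> borel_measurable lborel" by measurable
    show "integrable lborel (\<lambda>w. std_normal_density w * \<bar>Bv\<bar>)" by simp
    fix w
    have c: "continuous_on {-1..t0} (\<lambda>t. (\<lambda>(t,x). v t x) (t, x0 + sig t * w))"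
    proof (rule continuous_on_compose2[OF cv])
      show "continuous_on {-1..t0} (\<lambda>t. (t, x0 + sig t * w))"
        unfolding sig_def by (intro continuous_intros)
      show "(\<lambda>t. (t, x0 + sig t * w)) ` {-1..t0} \<subseteq> {-1..0} \<times> UNIV" using t0 by auto
    qed
    have "t0 \<in> {-1..t0}" using t0 by auto
    with c have "((\<lambda>t. v t (x0 + sig t * w)) \<longlongrightarrow> v t0 (x0 + sig t0 * w)) (at t0 within {-1..t0})"
      unfolding continuous_on_def by auto
    then have "((\<lambda>t. v t (x0 + sig t * w)) \<longlongrightarrow> v t0 x0) (at t0 within {-1..t0})"
      by (simp add: sig_def)
    then show "((\<lambda>t. std_normal_density w * v t (x0 + sig t * w)) \<longlongrightarrow> std_normal_density w * v t0 x0) (at t0 within {-1..t0})"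
      by (intro tendsto_mult tendsto_const)
  qed
  have "eventually (\<lambda>t. (\<integral>w. std_normal_density w * v t (x0 + sig t * w) \<partial>lborel) = Phi t) (at t0 within {-1..t0})"
    using ev by eventually_elim (simp add: Phi_subst)
  moreover have "(\<integral>w. std_normal_density w * v t0 x0 \<partial>lborel) = v t0 x0" by simp
  ultimately show ?thesis using lim by (simp add: tendsto_cong)
qed

end


context heat begin

definition "PhiT s = (if s = t0 then v t0 x0 else Phi s)"
definition "psiI s = (if s \<in> {-1<..<t0} then psi s else 0)"

lemma PhiT_cont: "continuous_on {-1..t0} PhiT"
proof (unfold continuous_on_eq_continuous_within, intro ballI)
  fix s assume s: "s \<in> {-1..t0}"
  show "continuous (at s within {-1..t0}) PhiT"
  proof (cases "s = t0")
    case True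
    have "eventually (\<lambda>t. Phi t = PhiT t) (at t0 within {-1..t0})"
      unfolding eventually_at_filter by (intro always_eventually) (auto simp: PhiT_def)
    then have "(PhiT \<longlongrightarrow> v t0 x0) (at t0 within {-1..t0})"
      using Phi_lim_t0 tendsto_cong by blast
    then show ?thesis using True unfolding continuous_within by (simp add: PhiT_def)
  next
    case False
    then have st: "s < t0" using s by auto
    have ev: "eventually (\<lambda>t. Phi t = PhiT t) (at s within {-1..t0})"
      unfolding eventually_at using st
      by (intro exI[of _ "t0 - s"]) (auto simp: PhiT_def dist_real_def)
    have "(Phi \<longlongrightarrow> Phi s) (at s within {-1..t0})"
    proof (cases "s = -1")
      case True then show ?thesis using Phi_cont_m1 by simp
    next
      case False
      then have "s \<in> {-1<..<t0}" using s st by auto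
      then have "isCont Phi s" using Phi_deriv by (blast intro: DERIV_isCont)
      from continuous_at_imp_continuous_at_within[OF this, of "{-1..t0}"]
      show ?thesis unfolding continuous_within .
    qed
    then have "(PhiT \<longlongrightarrow> Phi s) (at s within {-1..t0})" using ev tendsto_cong by blast
    then show ?thesis using st unfolding continuous_within by (simp add: PhiT_def)
  qed
qed

lemma PhiT_deriv:
  assumes s: "s \<in> {-1<..<t0}"
  shows "(PhiT has_vector_derivative psiI s) (at s)"
proof -
  have "(PhiT has_real_derivative psi s) (at s)"
    by (rule has_field_derivative_transform_within_open[OF Phi_deriv[OF s] _ s])
       (auto simp: PhiT_def)
  then show ?thesis using s by (simp add: psiI_def has_real_derivative_iff_has_vector_derivative)
qed

lemma FTC_main: "(psiI has_integral (v t0 x0 - Phi (-1))) {-1..t0}"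
proof -
  have "(psiI has_integral (PhiT t0 - PhiT (-1))) {-1..t0}"
    by (rule fundamental_theorem_of_calculus_interior) (use t0 PhiT_cont PhiT_deriv in auto)
  then show ?thesis using t0 by (simp add: PhiT_def)
qed

end


context heat begin

definition "Fw t = (\<integral>x. eta x * (f t x)\<^sup>2 \<partial>lborel)"

lemma Fw_nonneg: "Fw t \<ge> 0"
  unfolding Fw_def by (intro integral_nonneg_AE AE_I2) (simp add: eta_def)

lemma Fw_bound:
  assumes t: "t \<in> {-1<..<0}"
  shows "Fw t \<le> Bf\<^sup>2 * (\<integral>x. eta x \<partial>lborel)"
proof -
  have "Fw t \<le> (\<integral>x. eta x * Bf\<^sup>2 \<partial>lborel)"
    unfolding Fw_def
  proof (rule integral_mono)
    show "integrable lborel (\<lambda>x. eta x * (f t x)\<^sup>2)" by (rule eta_sq_integrable[OF f_meas[OF t] Bf[OF t]])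
    show "integrable lborel (\<lambda>x. eta x * Bf\<^sup>2)" using eta_integrable by simp
    fix x
    have "\<bar>f t x\<bar> \<le> \<bar>Bf\<bar>" using Bf[OF t, of x] by linarith
    then have "(f t x)\<^sup>2 \<le> Bf\<^sup>2" by (simp add: abs_le_square_iff)
    then show "eta x * (f t x)\<^sup>2 \<le> eta x * Bf\<^sup>2" using eta_pos[of x] by (simp add: mult_left_mono)
  qed
  then show ?thesis by (simp add: mult.commute)
qed

lemma strip_cont: "continuous_on ({-1<..<0} \<times> UNIV) (\<lambda>(t,x). eta x * (f t x)\<^sup>2)"
proof -
  have "continuous_on ({-1<..<0} \<times> UNIV) (\<lambda>p. eta (snd p) * ((\<lambda>(t,x). vt t x) p - a * (\<lambda>(t,x). vxx t x) p)\<^sup>2)"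
    unfolding eta_def by (intro continuous_intros cvt cvxx) auto
  then show ?thesis
    by (rule continuous_on_eq) (auto simp: f_eq)
qed

lemma Fw_meas: "(\<lambda>t. indicator {-1<..<0} t * Fw t) \<in> borel_measurable lborel"
proof -
  define G where "G = (\<lambda>p::real \<times> real. indicator ({-1<..<0} \<times> UNIV) p *\<^sub>R (\<lambda>(t,x). eta x * (f t x)\<^sup>2) p)"
  have "G \<in> borel_measurable borel"
    unfolding G_def by (rule borel_measurable_continuous_on_indicator)
      (auto intro!: strip_cont borel_open open_Times)
  then have "G \<in> borel_measurable (lborel \<Otimes>\<^sub>M lborel)"
    by (simp add: lborel_prod)
  then have "(\<lambda>t. \<integral>x. G (t, x) \<partial>lborel) \<in> borel_measurable lborel"
    by (intro lborel.borel_measurable_lebesgue_integral) simp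
  moreover have "(\<lambda>t. \<integral>x. G (t, x) \<partial>lborel) = (\<lambda>t. indicator {-1<..<0} t * Fw t)"
    by (auto simp: G_def Fw_def indicator_def fun_eq_iff)
  ultimately show ?thesis by simp
qed

lemma Fw_set_integrable: "set_integrable lborel {-1<..<0} Fw"
  unfolding set_integrable_def
proof (rule Bochner_Integration.integrable_bound)
  define K where "K = Bf\<^sup>2 * (\<integral>x. eta x \<partial>lborel)"
  show "integrable lborel (\<lambda>t::real. indicator {-1<..<0} t * K)"
  proof -
    show ?thesis
      by (intro integrable_mult_left, rule integrable_real_indicator) simp_all
  qed
  show "(\<lambda>t. indicator {-1<..<0} t *\<^sub>R Fw t) \<in> borel_measurable lborel"
    using Fw_meas by simp
  show "AE t in lborel. norm (indicator {-1<..<0} t *\<^sub>R Fw t) \<le> norm (indicator {-1<..<0} (t::real) * K)"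
  proof (intro AE_I2)
    fix t :: real
    show "norm (indicator {-1<..<0} t *\<^sub>R Fw t) \<le> norm (indicator {-1<..<0} t * K)"
    proof (cases "t \<in> {-1<..<0}")
      case True
      then have "Fw t \<le> K" using Fw_bound unfolding K_def by blast
      then show ?thesis using True Fw_nonneg[of t] by auto
    qed (auto simp: indicator_def)
  qed
qed

definition "MF = (LINT t:{-1<..<0}|lborel. Fw t)"

lemma Fw_HK:
  shows "Fw integrable_on {-1..t0}" "integral {-1..t0} Fw \<le> MF"
proof -
  have si: "set_integrable lborel {-1<..<t0} Fw"
    by (rule set_integrable_subset[OF Fw_set_integrable]) (use t0 in auto)
  note hk = set_borel_integral_eq_integral[OF si]
  have neg: "negligible {x \<in> {-1<..<t0} - {-1..t0}. Fw x \<noteq> 0}" "negligible {x \<in> {-1..t0} - {-1<..<t0}. Fw x \<noteq> 0}"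
    by (auto intro: negligible_subset[OF negligible_finite[of "{-1, t0}"]])
  have hi: "(Fw has_integral (LINT t:{-1<..<t0}|lborel. Fw t)) {-1..t0}"
    using hk has_integral_spike_set_eq[OF neg] by (simp add: has_integral_integral)
  then show "Fw integrable_on {-1..t0}" by blast
  have "integral {-1..t0} Fw = (LINT t:{-1<..<t0}|lborel. Fw t)" using hi by (rule integral_unique)
  also have "\<dots> \<le> MF"
    unfolding MF_def set_lebesgue_integral_def
  proof (rule integral_mono)
    show "integrable lborel (\<lambda>t. indicator {-1<..<t0} t *\<^sub>R Fw t)" using si by (simp add: set_integrable_def)
    show "integrable lborel (\<lambda>t. indicator {-1<..<0} t *\<^sub>R Fw t)" using Fw_set_integrable by (simp add: set_integrable_def)
    show "indicator {-1<..<t0} t *\<^sub>R Fw t \<le> indicator {-1<..<0} t *\<^sub>R Fw t" for t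
      using Fw_nonneg[of t] t0 by (auto simp: indicator_def)
  qed
  finally show "integral {-1..t0} Fw \<le> MF" .
qed

end


lemma eps_trick:
  fixes X P Q :: real
  assumes P: "P \<ge> 0" and Q: "Q \<ge> 0" and h: "\<And>eps. eps > 0 \<Longrightarrow> \<bar>X\<bar> \<le> P / (2 * eps) + eps / 2 * Q"
  shows "X\<^sup>2 \<le> P * Q"
proof (cases "X = 0")
  case True then show ?thesis using P Q by simp
next
  case False
  then have X: "\<bar>X\<bar> > 0" by simp
  show ?thesis
  proof (cases "Q = 0")
    case True
    define eps where "eps = (P + 1) / \<bar>X\<bar>"
    have e: "eps > 0" unfolding eps_def using P X by simp
    have "\<bar>X\<bar> \<le> P / (2 * eps)" using h[OF e] True by simp
    also have "\<dots> = P * \<bar>X\<bar> / (2 * (P + 1))" unfolding eps_def using X P by (simp add: field_simps)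
    also have "\<dots> < \<bar>X\<bar>"
    proof -
      have n: "0 \<le> P * \<bar>X\<bar>" using P by simp
      have e: "\<bar>X\<bar> * (2 * (P + 1)) = 2 * (P * \<bar>X\<bar>) + 2 * \<bar>X\<bar>" by (simp add: algebra_simps)
      have "P * \<bar>X\<bar> < \<bar>X\<bar> * (2 * (P + 1))" using e n X by linarith
      moreover have "0 < 2 * (P + 1)" using P by simp
      ultimately show ?thesis by (simp add: divide_less_eq mult.commute)
    qed
    finally show ?thesis by simp
  next
    case False
    then have Qp: "Q > 0" using Q by simp
    define eps where "eps = \<bar>X\<bar> / Q"
    have e: "eps > 0" unfolding eps_def using Qp X by simp
    have "\<bar>X\<bar> \<le> P * Q / (2 * \<bar>X\<bar>) + \<bar>X\<bar> / 2"
      using h[OF e] unfolding eps_def using Qp X by (simp add: field_simps)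
    then have "\<bar>X\<bar> * \<bar>X\<bar> \<le> P * Q" using X by (simp add: field_simps)
    then show ?thesis by (simp add: power2_eq_square)
  qed
qed

lemma sqrt_inv_integral:
  assumes "-1 < t0"
  shows "((\<lambda>s. 1 / sqrt (t0 - s)) has_integral 2 * sqrt (t0 + 1)) {-1..t0}"
proof -
  have "((\<lambda>s. 1 / sqrt (t0 - s)) has_integral ((-2 * sqrt (t0 - t0)) - (-2 * sqrt (t0 - (-1))))) {-1..t0}"
  proof (rule fundamental_theorem_of_calculus_interior)
    show "-1 \<le> t0" using assms by simp
    show "continuous_on {-1..t0} (\<lambda>s. -2 * sqrt (t0 - s))" by (intro continuous_intros)
    fix s assume s: "s \<in> {-1<..<t0}"
    have "((\<lambda>s. -2 * sqrt (t0 - s)) has_real_derivative 1 / sqrt (t0 - s)) (at s)"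
      using s by (auto intro!: derivative_eq_intros simp: field_simps)
    then show "((\<lambda>s. -2 * sqrt (t0 - s)) has_vector_derivative 1 / sqrt (t0 - s)) (at s)"
      by (simp add: has_real_derivative_iff_has_vector_derivative)
  qed
  then show ?thesis by simp
qed

context heat begin

definition "E0 = exp (1 + \<bar>x0\<bar>)"
definition "M0 = (\<integral>x. eta x * (v (-1) x)\<^sup>2 \<partial>lborel)"

lemma est_Phi_m1:
  assumes eps: "eps > 0"
  shows "\<bar>Phi (-1)\<bar> \<le> E0 / sqrt (pi * a * (t0 + 1)) / (2 * eps) + eps / 2 * M0"
proof -
  have tp: "t0 + 1 > 0" using t0 by simp
  have at: "a * (t0 + 1) \<le> 1" using a_pos a_le t0 by (intro mult_le_one) auto
  have vI: "-1 \<in> {-1..0::real}" by simp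
  show ?thesis
    using kernel_pairing(2)[OF a_pos tp at v_meas[OF vI] Bv[OF vI] eps, of x0]
    unfolding Phi_def phi_def E0_def M0_def by simp
qed

lemma est_psi:
  assumes s: "s \<in> {-1<..<t0}" and eps: "eps > 0"
  shows "\<bar>psi s\<bar> \<le> E0 / sqrt (pi * a * (t0 - s)) / (2 * eps) + eps / 2 * Fw s"
proof -
  have tp: "t0 - s > 0" using s by simp
  have at: "a * (t0 - s) \<le> 1" using a_pos a_le t0 s by (intro mult_le_one) auto
  have sI: "s \<in> {-1<..<0}" using s t0 by auto
  show ?thesis
    using kernel_pairing(2)[OF a_pos tp at f_meas[OF sI] Bf[OF sI] eps, of x0]
    unfolding psi_def phi_def E0_def Fw_def by simp
qed

lemma est_I:
  assumes eps: "eps > 0"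
  shows "\<bar>v t0 x0 - Phi (-1)\<bar> \<le> (E0 / sqrt (pi * a) * (2 * sqrt (t0 + 1))) / (2 * eps) + eps / 2 * MF"
proof -
  define c where "c = E0 / sqrt (pi * a) / (2 * eps)"
  define h where "h s = c * (1 / sqrt (t0 - s)) + eps / 2 * Fw s" for s
  have c: "c \<ge> 0" unfolding c_def E0_def using a_pos eps by simp
  have hi: "(h has_integral (c * (2 * sqrt (t0 + 1)) + eps / 2 * integral {-1..t0} Fw)) {-1..t0}"
    unfolding h_def
    by (intro has_integral_add has_integral_mult_right sqrt_inv_integral t0 integrable_integral Fw_HK)
  have pi: "psiI integrable_on {-1..t0}" using FTC_main by blast
  have "norm (integral {-1..t0} psiI) \<le> integral {-1..t0} h"
  proof (rule Henstock_Kurzweil_Integration.integral_norm_bound_integral[OF pi])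
    show "h integrable_on {-1..t0}" using hi by blast
    fix s assume s: "s \<in> {-1..t0}"
    have hn: "h s \<ge> 0" unfolding h_def using c eps Fw_nonneg[of s] s by (intro add_nonneg_nonneg mult_nonneg_nonneg) auto
    show "norm (psiI s) \<le> h s"
    proof (cases "s \<in> {-1<..<t0}")
      case True
      have "sqrt (pi * a * (t0 - s)) = sqrt (pi * a) * sqrt (t0 - s)" by (simp add: real_sqrt_mult)
      then have "E0 / sqrt (pi * a * (t0 - s)) / (2 * eps) = c * (1 / sqrt (t0 - s))"
        unfolding c_def by simp
      then show ?thesis using est_psi[OF True eps] True unfolding psiI_def h_def by simp
    next
      case False then show ?thesis using hn unfolding psiI_def by auto
    qed
  qed
  also have "integral {-1..t0} h = c * (2 * sqrt (t0 + 1)) + eps / 2 * integral {-1..t0} Fw"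
    using hi by (rule integral_unique)
  also have "\<dots> \<le> c * (2 * sqrt (t0 + 1)) + eps / 2 * MF"
    using Fw_HK(2) eps by simp
  finally show ?thesis
    using integral_unique[OF FTC_main] unfolding c_def by simp
qed

end


context heat begin

lemma M0_nonneg: "M0 \<ge> 0"
  unfolding M0_def by (intro integral_nonneg_AE AE_I2) (simp add: eta_def)

lemma MF_nonneg: "MF \<ge> 0"
  unfolding MF_def set_lebesgue_integral_def
  by (intro integral_nonneg_AE AE_I2) (simp add: Fw_nonneg)

lemma final_est:
  "sqrt (t0 + 1) * eta x0 * (v t0 x0)\<^sup>2 \<le> 2 * exp 1 / sqrt (pi * a) * (MF + M0)"
proof -
  define X where "X = Phi (-1)"
  define Y where "Y = v t0 x0 - Phi (-1)"
  define c where "c = exp 1 / sqrt (pi * a)"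
  define P0 where "P0 = E0 / sqrt (pi * a * (t0 + 1))"
  define P1 where "P1 = E0 / sqrt (pi * a) * (2 * sqrt (t0 + 1))"
  have tp: "t0 + 1 > 0" using t0 by simp
  have pa: "sqrt (pi * a) > 0" using a_pos by simp
  have E0p: "E0 > 0" unfolding E0_def by simp
  have X2: "X\<^sup>2 \<le> P0 * M0"
    unfolding X_def by (rule eps_trick) (use est_Phi_m1 M0_nonneg E0p tp a_pos in \<open>auto simp: P0_def\<close>)
  have Y2: "Y\<^sup>2 \<le> P1 * MF"
    unfolding Y_def by (rule eps_trick) (use est_I MF_nonneg E0p tp pa in \<open>auto simp: P1_def\<close>)
  have etaE: "eta x0 * E0 = exp 1 / 2"
    unfolding eta_def E0_def by (simp add: exp_add exp_minus field_simps)
  have s: "sqrt (pi * a * (t0 + 1)) = sqrt (pi * a) * sqrt (t0 + 1)" by (simp add: real_sqrt_mult)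
  have stp: "sqrt (t0 + 1) > 0" using tp by simp
  have w: "sqrt (t0 + 1) * eta x0 \<ge> 0" using eta_pos[of x0] stp by simp
  have A: "sqrt (t0 + 1) * eta x0 * P0 = c / 2"
  proof -
    have "sqrt (t0 + 1) * eta x0 * P0 = (eta x0 * E0) / sqrt (pi * a)"
      unfolding P0_def s using stp pa by (simp add: field_simps)
    then show ?thesis unfolding etaE c_def by simp
  qed
  have B: "sqrt (t0 + 1) * eta x0 * P1 = c * (t0 + 1)"
    unfolding P1_def c_def using stp pa etaE tp
    by (simp add: field_simps)
  have c: "c \<ge> 0" unfolding c_def using pa by simp
  have v2: "(v t0 x0)\<^sup>2 \<le> 2 * X\<^sup>2 + 2 * Y\<^sup>2"
  proof -
    have "v t0 x0 = X + Y" unfolding X_def Y_def by simp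
    moreover have "(X + Y)\<^sup>2 \<le> 2 * X\<^sup>2 + 2 * Y\<^sup>2"
      using sum_squares_ge_zero[of "X - Y" 0] by (simp add: power2_eq_square algebra_simps)
    ultimately show ?thesis by simp
  qed
  have "sqrt (t0 + 1) * eta x0 * (v t0 x0)\<^sup>2 \<le> sqrt (t0 + 1) * eta x0 * (2 * X\<^sup>2 + 2 * Y\<^sup>2)"
    using w v2 by (rule mult_left_mono[rotated])
  also have "\<dots> \<le> sqrt (t0 + 1) * eta x0 * (2 * (P0 * M0) + 2 * (P1 * MF))"
    using X2 Y2 w by (intro mult_left_mono) auto
  also have "\<dots> = 2 * (sqrt (t0 + 1) * eta x0 * P0) * M0 + 2 * (sqrt (t0 + 1) * eta x0 * P1) * MF"
    by (simp add: algebra_simps)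
  also have "\<dots> = c * M0 + 2 * c * (t0 + 1) * MF" unfolding A B by simp
  also have "\<dots> \<le> 2 * c * M0 + 2 * c * MF"
  proof -
    have "c * M0 \<le> 2 * c * M0" using c M0_nonneg by (simp add: mult_right_mono)
    moreover have "2 * c * (t0 + 1) * MF \<le> 2 * c * 1 * MF"
      using c MF_nonneg t0 by (intro mult_right_mono mult_left_mono) auto
    ultimately show ?thesis by simp
  qed
  also have "\<dots> = 2 * exp 1 / sqrt (pi * a) * (MF + M0)" unfolding c_def by (simp add: algebra_simps add_divide_distrib)
  finally show ?thesis .
qed

end


lemma bounded_strip:
  assumes "bounded ((\<lambda>(t,x). w t x) ` (S \<times> UNIV))"
  shows "\<exists>B. \<forall>t\<in>S. \<forall>x. \<bar>w t x\<bar> \<le> (B::real)"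
proof -
  obtain B where B: "\<forall>y\<in>(\<lambda>(t,x). w t x) ` (S \<times> UNIV). norm y \<le> B"
    using assms unfolding bounded_iff by blast
  have "\<forall>t\<in>S. \<forall>x. \<bar>w t x\<bar> \<le> B"
  proof (intro ballI allI)
    fix t x assume "t \<in> S"
    then have "w t x \<in> (\<lambda>(t,x). w t x) ` (S \<times> UNIV)" by force
    then show "\<bar>w t x\<bar> \<le> B" using B by auto
  qed
  then show ?thesis by blast
qed

theorem proposition7:
  fixes lam :: real
  assumes "lam > 0"
  shows "\<exists>C. \<forall>(a0::real) (v::real\<Rightarrow>real\<Rightarrow>real) (f::real\<Rightarrow>real\<Rightarrow>real)
      (vt::real\<Rightarrow>real\<Rightarrow>real) (vx::real\<Rightarrow>real\<Rightarrow>real) (vxx::real\<Rightarrow>real\<Rightarrow>real).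
    a0 \<in> {lam..1}
    \<and> continuous_on ({-1..0} \<times> UNIV) (\<lambda>(t,x). v t x)
    \<and> continuous_on ({-1<..<0} \<times> UNIV) (\<lambda>(t,x). vt t x)
    \<and> continuous_on ({-1<..<0} \<times> UNIV) (\<lambda>(t,x). vx t x)
    \<and> continuous_on ({-1<..<0} \<times> UNIV) (\<lambda>(t,x). vxx t x)
    \<and> (\<forall>t\<in>{-1<..<0}. \<forall>x.
          ((\<lambda>s. v s x) has_real_derivative vt t x) (at t)
        \<and> ((\<lambda>y. v t y) has_real_derivative vx t x) (at x)
        \<and> ((\<lambda>y. vx t y) has_real_derivative vxx t x) (at x)
        \<and> vt t x - a0 * vxx t x = f t x)
    \<and> bounded ((\<lambda>(t,x). v t x) ` ({-1..0} \<times> UNIV))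
    \<and> bounded ((\<lambda>(t,x). vt t x) ` ({-1<..<0} \<times> UNIV))
    \<and> bounded ((\<lambda>(t,x). vx t x) ` ({-1<..<0} \<times> UNIV))
    \<and> bounded ((\<lambda>(t,x). vxx t x) ` ({-1<..<0} \<times> UNIV))
    \<longrightarrow> (\<forall>t\<in>{-1<..<0}. \<forall>x.
          sqrt (t + 1) * eta x * (v t x)\<^sup>2
          \<le> C * ((LBINT t:{-1<..<0}. LBINT x. eta x * (f t x)\<^sup>2)
                 + (LBINT x. eta x * (v (-1) x)\<^sup>2)))"
proof -
  define C where "C = 2 * exp 1 / sqrt (pi * lam)"
  show ?thesis
    apply (rule exI[of _ C])
    apply (intro allI impI ballI)
    apply (elim conjE)
    subgoal premises prems for a0 v f vt vx vxx t x
    proof -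
      obtain Bv where Bv: "\<forall>t\<in>{-1..0}. \<forall>x. \<bar>v t x\<bar> \<le> Bv" using bounded_strip[OF prems(8)] by blast
      obtain Bt where Bt: "\<forall>t\<in>{-1<..<0}. \<forall>x. \<bar>vt t x\<bar> \<le> Bt" using bounded_strip[OF prems(9)] by blast
      obtain Bx where Bx: "\<forall>t\<in>{-1<..<0}. \<forall>x. \<bar>vx t x\<bar> \<le> Bx" using bounded_strip[OF prems(10)] by blast
      obtain Bxx where Bxx: "\<forall>t\<in>{-1<..<0}. \<forall>x. \<bar>vxx t x\<bar> \<le> Bxx" using bounded_strip[OF prems(11)] by blast
      have a0: "lam \<le> a0" "a0 \<le> 1" using prems(2) by auto
      have a0p: "0 < a0" using a0 assms by simp
      have t: "-1 < t" "t < 0" using prems(1) by auto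
      interpret h: heat a0 v vt vx vxx f Bv Bt Bx Bxx t x
      proof
        show "0 < a0" "a0 \<le> 1" using a0p a0 by auto
        show "continuous_on ({-1..0} \<times> UNIV) (\<lambda>(t,x). v t x)" by (rule prems(3))
        show "continuous_on ({-1<..<0} \<times> UNIV) (\<lambda>(t,x). vt t x)" by (rule prems(4))
        show "continuous_on ({-1<..<0} \<times> UNIV) (\<lambda>(t,x). vxx t x)" by (rule prems(6))
        show "\<And>t x. t \<in> {-1<..<0} \<Longrightarrow> ((\<lambda>s. v s x) has_real_derivative vt t x) (at t)"
          using prems(7) by blast
        show "\<And>t x. t \<in> {-1<..<0} \<Longrightarrow> ((\<lambda>y. v t y) has_real_derivative vx t x) (at x)"
          using prems(7) by blast
        show "\<And>t x. t \<in> {-1<..<0} \<Longrightarrow> ((\<lambda>y. vx t y) has_real_derivative vxx t x) (at x)"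
          using prems(7) by blast
        show "\<And>t x. t \<in> {-1<..<0} \<Longrightarrow> vt t x - a0 * vxx t x = f t x"
          using prems(7) by blast
        show "\<And>t x. t \<in> {-1..0} \<Longrightarrow> \<bar>v t x\<bar> \<le> Bv" using Bv by blast
        show "\<And>t x. t \<in> {-1<..<0} \<Longrightarrow> \<bar>vt t x\<bar> \<le> Bt" using Bt by blast
        show "\<And>t x. t \<in> {-1<..<0} \<Longrightarrow> \<bar>vx t x\<bar> \<le> Bx" using Bx by blast
        show "\<And>t x. t \<in> {-1<..<0} \<Longrightarrow> \<bar>vxx t x\<bar> \<le> Bxx" using Bxx by blast
        show "-1 < t" "t < 0" using t by auto
      qed
      have "sqrt (t + 1) * eta x * (v t x)\<^sup>2 \<le> 2 * exp 1 / sqrt (pi * a0) * (h.MF + h.M0)"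
        by (rule h.final_est)
      also have "\<dots> \<le> C * (h.MF + h.M0)"
      proof (rule mult_right_mono)
        show "0 \<le> h.MF + h.M0" using h.MF_nonneg h.M0_nonneg by simp
        have "sqrt (pi * lam) \<le> sqrt (pi * a0)" using a0 by simp
        moreover have "0 < sqrt (pi * lam)" using assms by simp
        ultimately show "2 * exp 1 / sqrt (pi * a0) \<le> C"
          unfolding C_def using a0p by (intro divide_left_mono mult_pos_pos) auto
      qed
      also have "\<dots> = C * ((LBINT t:{-1<..<0}. LBINT x. eta x * (f t x)\<^sup>2) + (LBINT x. eta x * (v (-1) x)\<^sup>2))"
        unfolding h.MF_def h.Fw_def h.M0_def by simp
      finally show ?thesis .
    qed
    done
qed

end
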